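(* Two pairs of increasing arithmetic progressions $(\alpha n+\beta,\ \gamma m+\delta)$ and $(\tilde\alpha n+\tilde\beta,\ \tilde\gamma m+\tilde\delta)$ (indices $n,m\in\mathbb N$) with irrational relative densities are topologically equivalent at $+\infty$ if and only if $$\frac{\alpha}{\gamma}=\frac{\tilde\alpha}{\tilde\gamma}\quad\text{and}\quad \frac{\beta-\delta}{\gamma}\equiv\frac{\tilde\beta-\tilde\delta}{\tilde\gamma}\pmod{\bigl(1,\tfrac{\alpha}{\gamma}\bigr)},$$ the latter meaning that the difference lies in the additive subgroup of $\mathbb R$ generated by $1$ and $\alpha/\gamma$.
   Context: For a pair of arithmetic progressions $(\alpha n+\beta,\ \gamma m+\delta)$ the relative density is $A=\alpha/\gamma$ and the normalized difference of the free terms is $\tau=(\beta-\delta)/\gamma$. Two pairs of sequences on the real line are topologically equivalent at $+\infty$ if there is a homeomorphism of the line defined in a neighborhood of $+\infty$ which maps the first sequence of the first pair to the first sequence of the second pair and the second sequence of the first pair to the second sequence of the second pair. *)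

theory Defs
  imports "HOL-Analysis.Analysis"
begin

definition AP :: "real \<Rightarrow> real \<Rightarrow> real set" where
  "AP a b = range (\<lambda>n::nat. a * real n + b)"

definition top_equiv_at_top :: "real set \<Rightarrow> real set \<Rightarrow> real set \<Rightarrow> real set \<Rightarrow> bool" where
  "top_equiv_at_top A B A' B' \<longleftrightarrow>
     (\<exists>R R' h g. homeomorphism {R<..} {R'<..} h g \<and> filterlim h at_top at_top \<and>
        h ` (A \<inter> {R<..}) = A' \<inter> {R'<..} \<and> h ` (B \<inter> {R<..}) = B' \<inter> {R'<..})"

definition subgrp_1 :: "real \<Rightarrow> real set" where
  "subgrp_1 a = {of_int k + of_int l * a | k l. True}"

end

theory Submission imports Defs begin

lemma homeo_strict_mono:
  fixes h g :: "real \<Rightarrow> real"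
  assumes hom: "homeomorphism {R<..} {R'<..} h g" and lim: "filterlim h at_top at_top"
  shows "strict_mono_on {R<..} h"
proof (rule strict_mono_onI)
  have cont: "continuous_on {R<..} h" and inv: "\<And>x. x \<in> {R<..} \<Longrightarrow> g (h x) = x"
    using hom by (auto simp: homeomorphism_def)
  fix x y assume x: "x \<in> {R<..}" and y: "y \<in> {R<..}" and xy: "x < y"
  show "h x < h y"
  proof (rule ccontr)
    assume "\<not> h x < h y"
    moreover have "h x \<noteq> h y"
    proof
      assume "h x = h y" then have "g (h x) = g (h y)" by simp
      then show False using inv[OF x] inv[OF y] xy by simp
    qed
    ultimately have yx: "h y < h x" by auto
    have "eventually (\<lambda>z. h x < h z) at_top" using lim by (simp add: filterlim_at_top_dense)
    then obtain Z where Z: "\<And>z. z \<ge> Z \<Longrightarrow> h x < h z" by (auto simp: eventually_at_top_linorder)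
    define z where "z = max Z (y+1)"
    have hz: "h x < h z" using Z z_def by auto
    have sub: "{x..z} \<subseteq> {R<..}" using x by auto
    have "(h x < h y \<and> h y < h z) \<or> (h z < h y \<and> h y < h x)"
    proof -
      have "y < z" using z_def by auto
      moreover have "continuous_on {x..z} h" using continuous_on_subset[OF cont sub] .
      moreover have "inj_on h {x..z}" using inv sub by (metis inj_on_inverseI subsetD)
      ultimately show ?thesis using continuous_inj_imp_mono[of x y z h] xy by blast
    qed
    then show False using yx hz by auto
  qed
qed

lemma AP_index:
  fixes h :: "real \<Rightarrow> real"
  assumes a: "a > 0" "a' > 0" and sm: "strict_mono_on {R<..} h"
    and img: "h ` (AP a b \<inter> {R<..}) = AP a' b' \<inter> {R'<..}"
  shows "\<exists>N N'. \<forall>j. a * real (N + j) + b > R \<and> h (a * real (N + j) + b) = a' * real (N' + j) + b'"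
proof -
  have ex: "\<exists>n::nat. c * real n + e > T" if "c > 0" for c e T :: real
  proof -
    obtain n :: nat where "(T - e) / c < real n" using reals_Archimedean2 by blast
    then have "T - e < c * real n" using that by (simp add: field_simps)
    then show ?thesis by (intro exI[of _ n]) simp
  qed
  define N where "N = (LEAST n::nat. a * real n + b > R)"
  define N' where "N' = (LEAST n::nat. a' * real n + b' > R')"
  have Nge: "a * real n + b > R \<longleftrightarrow> n \<ge> N" for n
  proof
    assume "a * real n + b > R" then show "n \<ge> N" unfolding N_def by (rule Least_le)
  next
    assume "n \<ge> N"
    moreover have "a * real N + b > R" unfolding N_def by (rule LeastI_ex) (rule ex[OF a(1)])
    ultimately show "a * real n + b > R" using a(1)
      by (smt (verit) mult_left_mono of_nat_mono)
  qed
  have N'ge: "a' * real n + b' > R' \<longleftrightarrow> n \<ge> N'" for n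
  proof
    assume "a' * real n + b' > R'" then show "n \<ge> N'" unfolding N'_def by (rule Least_le)
  next
    assume "n \<ge> N'"
    moreover have "a' * real N' + b' > R'" unfolding N'_def by (rule LeastI_ex) (rule ex[OF a(2)])
    ultimately show "a' * real n + b' > R'" using a(2)
      by (smt (verit) mult_left_mono of_nat_mono)
  qed
  have inR: "a * real (N + j) + b > R" for j by (metis Nge le_add1)
  have "\<forall>j. \<exists>n. h (a * real (N + j) + b) = a' * real n + b' \<and> n \<ge> N'"
  proof
    fix j
    have "a * real (N + j) + b \<in> AP a b" unfolding AP_def by (rule image_eqI[where x="N+j"]) auto
    then have "a * real (N + j) + b \<in> AP a b \<inter> {R<..}" using inR[of j] by simp
    then have "h (a * real (N + j) + b) \<in> AP a' b' \<inter> {R'<..}" using img by blast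
    then obtain n where "h (a * real (N + j) + b) = a' * real n + b'" "a' * real n + b' > R'"
      by (auto simp: AP_def)
    then show "\<exists>n. h (a * real (N + j) + b) = a' * real n + b' \<and> n \<ge> N'" using N'ge by blast
  qed
  then obtain \<sigma> where \<sigma>: "\<And>j. h (a * real (N + j) + b) = a' * real (\<sigma> j) + b'" "\<And>j. \<sigma> j \<ge> N'"
    by metis
  have sms: "\<sigma> j < \<sigma> k" if "j < k" for j k
  proof -
    have "a * real (N + j) + b < a * real (N + k) + b" using that a by simp
    then have "h (a * real (N + j) + b) < h (a * real (N + k) + b)"
      using strict_mono_onD[OF sm] inR by auto
    then have "a' * real (\<sigma> j) < a' * real (\<sigma> k)" using \<sigma> by simp
    then show ?thesis using a(2) by simp
  qed
  have ms: "\<sigma> j \<le> \<sigma> k" if "j \<le> k" for j k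
    using sms[of j k] that by (cases "j = k") auto
  have surj: "\<exists>j. \<sigma> j = n" if "n \<ge> N'" for n
  proof -
    have "a' * real n + b' \<in> AP a' b' \<inter> {R'<..}" using N'ge that by (auto simp: AP_def)
    then obtain x where x: "x \<in> AP a b \<inter> {R<..}" "h x = a' * real n + b'" using img
      by (metis imageE)
    then obtain m where m: "x = a * real m + b" "a * real m + b > R" by (auto simp: AP_def)
    then have "m \<ge> N" using Nge by blast
    then have "x = a * real (N + (m - N)) + b" using m by simp
    then have "a' * real (\<sigma> (m - N)) + b' = a' * real n + b'" using \<sigma>(1)[of "m - N"] x by simp
    then have "\<sigma> (m - N) = n" using a(2) by simp
    then show ?thesis by blast
  qed
  have "\<sigma> j = N' + j" for j
  proof (induction j)
    case 0
    obtain i where "\<sigma> i = N'" using surj by blast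
    then show ?case using ms[of 0 i] \<sigma>(2)[of 0] by simp
  next
    case (Suc j)
    obtain i where i: "\<sigma> i = N' + Suc j" using surj by fastforce
    have "\<not> i \<le> j"
    proof
      assume "i \<le> j" then have "\<sigma> i \<le> \<sigma> j" by (rule ms)
      then show False using i Suc by simp
    qed
    then have "\<sigma> (Suc j) \<le> \<sigma> i" using ms by simp
    moreover have "\<sigma> j < \<sigma> (Suc j)" using sms by simp
    ultimately show ?case using i Suc by simp
  qed
  then show ?thesis using inR \<sigma>(1) by metis
qed


lemma eqa:
  fixes a a' s s' :: real
  assumes "0 < a" "0 < a'" and H: "\<forall>n m::nat. (real m \<le> a * real n + s \<longleftrightarrow> real m \<le> a' * real n + s')"
    and lt: "a < a'"
  shows False
proof -
  obtain n :: nat where n: "(1 + \<bar>s\<bar> + \<bar>s'\<bar>) / (a' - a) < real n" using reals_Archimedean2 by blast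
  then have n2: "1 + \<bar>s\<bar> + \<bar>s'\<bar> < (a' - a) * real n" using lt by (simp add: field_simps)
  have an: "a * real n \<ge> 0" using assms by simp
  have pos: "a' * real n + s' \<ge> 0" using n2 an by (smt (verit) left_diff_distrib)
  have gap: "a' * real n + s' - (a * real n + s) > 1" using n2 by (smt (verit) left_diff_distrib)
  define m where "m = nat \<lfloor>a' * real n + s'\<rfloor>"
  have m1: "real m \<le> a' * real n + s'" using pos unfolding m_def by (simp add: of_nat_nat)
  have f1: "real_of_int \<lfloor>a' * real n + s'\<rfloor> > a' * real n + s' - 1"
    using floor_correct[of "a' * real n + s'"] by simp
  have m2: "real m > a' * real n + s' - 1" using pos f1 unfolding m_def by simp
  show False using H m1 m2 gap by (smt (verit))
qed

lemma eqs:
  fixes a s s' :: real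
  assumes irr: "a \<notin> \<rat>" and a: "0 < a"
    and H: "\<forall>n m::nat. (real m \<le> a * real n + s \<longleftrightarrow> real m \<le> a * real n + s')"
    and lt: "s' < s"
  shows False
proof -
  obtain n0 :: nat where n0: "\<bar>s'\<bar> / a < real n0" using reals_Archimedean2 by blast
  then have p0: "a * real n0 + s' > 0" using a by (simp add: field_simps)
  define d where "d = s - s'"
  define c where "c = a * real n0 + s"
  have d: "d > 0" using lt d_def by simp
  obtain hh k where k: "k > 0" and hk: "\<bar>of_int k * a - of_int hh - (d/2 - c)\<bar> < d/2"
  proof -
    have "d/2 > 0" using d by simp
    from sequence_of_fractional_parts_is_dense[OF irr this, of "d/2 - c"] that show thesis by blast
  qed
  define n where "n = n0 + nat k"
  have rn: "real n = real n0 + of_int k" using k n_def by simp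
  have t: "a * real n + s = of_int k * a + c" unfolding rn c_def by (simp add: algebra_simps)
  have ak: "of_int k * a > 0" using k a by simp
  have l1: "of_int hh < a * real n + s" using hk t by linarith
  have l2: "a * real n + s' < of_int hh" using hk t d_def by linarith
  have l3: "a * real n + s' > 0" using p0 ak t c_def d_def by linarith
  define m where "m = nat hh"
  have rm: "real m = of_int hh" using l2 l3 unfolding m_def by simp
  show False using H l1 l2 rm by (metis less_le_not_le)
qed

lemma affine_AP:
  fixes a a' b b' c d R :: real and l :: int
  assumes "c > 0" "a > 0" "a' > 0" "c * a = a'" "c * b + d = a' * of_int l + b'"
    and "R \<ge> b - a" "c * R + d \<ge> b' - a'"
  shows "(\<lambda>x. c * x + d) ` (AP a b \<inter> {R<..}) = AP a' b' \<inter> {c * R + d<..}"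
proof
  show "(\<lambda>x. c * x + d) ` (AP a b \<inter> {R<..}) \<subseteq> AP a' b' \<inter> {c * R + d<..}"
  proof
    fix y assume "y \<in> (\<lambda>x. c * x + d) ` (AP a b \<inter> {R<..})"
    then obtain n :: nat where y: "y = c * (a * real n + b) + d" and gt: "a * real n + b > R"
      by (auto simp: AP_def)
    have "y = (c*a) * real n + (c*b+d)" using y by (simp add: algebra_simps)
    then have y2: "y = a' * (real n + of_int l) + b'" unfolding assms(4,5) by (simp add: algebra_simps)
    have ygt: "y > c * R + d" using y gt assms(1) by simp
    then have "a' * (real n + of_int l) > a' * (-1)" using y2 assms(7) by linarith
    then have "real n + of_int l > -1" using assms(3) by (simp only: mult_less_cancel_left_pos)
    then have nl: "int n + l \<ge> 0" by linarith
    have "y = a' * real (nat (int n + l)) + b'" using y2 nl by simp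
    then show "y \<in> AP a' b' \<inter> {c * R + d<..}" using ygt by (auto simp: AP_def)
  qed
next
  show "AP a' b' \<inter> {c * R + d<..} \<subseteq> (\<lambda>x. c * x + d) ` (AP a b \<inter> {R<..})"
  proof
    fix y assume "y \<in> AP a' b' \<inter> {c * R + d<..}"
    then obtain n :: nat where y: "y = a' * real n + b'" and gt: "y > c * R + d"
      by (auto simp: AP_def)
    define x where "x = a * (real n - of_int l) + b"
    have "c * x + d = (c*a) * (real n - of_int l) + (c*b+d)" unfolding x_def by (simp add: algebra_simps)
    then have hx: "c * x + d = y" unfolding assms(4,5) y by (simp add: algebra_simps)
    have xgt: "x > R" using hx gt assms(1) by (smt (verit) mult_le_cancel_left_pos)
    then have "a * (real n - of_int l) > a * (-1)" using x_def assms(6) by linarith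
    then have "real n - of_int l > -1" using assms(2) by (simp only: mult_less_cancel_left_pos)
    then have nl: "int n - l \<ge> 0" by linarith
    have "x = a * real (nat (int n - l)) + b" using x_def nl by simp
    then have "x \<in> AP a b \<inter> {R<..}" using xgt by (auto simp: AP_def)
    then show "y \<in> (\<lambda>x. c * x + d) ` (AP a b \<inter> {R<..})" using hx by force
  qed
qed


lemma conv:
  fixes \<alpha> \<beta> \<gamma> \<delta> :: real and N M n m :: nat
  assumes "\<gamma> > 0"
  shows "(\<alpha> * real (N + n) + \<beta> < \<gamma> * real (M + m) + \<delta>) \<longleftrightarrow>
         (\<alpha> / \<gamma> * real n + ((\<alpha> * real N + \<beta> - \<delta>) / \<gamma> - real M) < real m)"
proof -
  have "\<alpha> / \<gamma> * real n + ((\<alpha> * real N + \<beta> - \<delta>) / \<gamma> - real M) - real m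
      = ((\<alpha> * real (N + n) + \<beta>) - (\<gamma> * real (M + m) + \<delta>)) / \<gamma>"
    using assms by (simp add: field_simps)
  moreover have "(X / \<gamma> < 0) \<longleftrightarrow> X < 0" for X using assms by (simp add: divide_less_0_iff)
  ultimately show ?thesis by (smt (verit))
qed

lemma affine_homeo:
  fixes c d R :: real
  assumes "c > 0"
  shows "homeomorphism {R<..} {c * R + d<..} (\<lambda>x. c * x + d) (\<lambda>y. (y - d) / c)"
  unfolding homeomorphism_def
proof (intro conjI)
  show "continuous_on {R<..} (\<lambda>x. c * x + d)" by (intro continuous_intros)
  show "continuous_on {c * R + d<..} (\<lambda>y. (y - d) / c)" using assms by (auto intro!: continuous_intros)
  show "(\<lambda>x. c * x + d) ` {R<..} = {c * R + d<..}"
  proof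
    show "(\<lambda>x. c * x + d) ` {R<..} \<subseteq> {c * R + d<..}" using assms by auto
    show "{c * R + d<..} \<subseteq> (\<lambda>x. c * x + d) ` {R<..}"
    proof
      fix y assume y: "y \<in> {c * R + d<..}"
      have "(y - d) / c > R" using y assms by (simp add: field_simps)
      moreover have "y = c * ((y - d) / c) + d" using assms by simp
      ultimately show "y \<in> (\<lambda>x. c * x + d) ` {R<..}" by force
    qed
  qed
  show "(\<lambda>y. (y - d) / c) ` {c * R + d<..} = {R<..}"
  proof
    show "(\<lambda>y. (y - d) / c) ` {c * R + d<..} \<subseteq> {R<..}" using assms by (auto simp: field_simps)
    show "{R<..} \<subseteq> (\<lambda>y. (y - d) / c) ` {c * R + d<..}"
    proof
      fix x assume x: "x \<in> {R<..}"
      have "c * x + d > c * R + d" using x assms by simp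
      moreover have "x = (c * x + d - d) / c" using assms by simp
      ultimately show "x \<in> (\<lambda>y. (y - d) / c) ` {c * R + d<..}"
        by (intro image_eqI[where x="c * x + d"]) auto
    qed
  qed
  show "\<forall>x\<in>{R<..}. (c * x + d - d) / c = x" using assms by simp
  show "\<forall>y\<in>{c * R + d<..}. c * ((y - d) / c) + d = y" using assms by simp
qed

theorem lemma6:
  fixes \<alpha> \<beta> \<gamma> \<delta> \<alpha>' \<beta>' \<gamma>' \<delta>' :: real
  assumes "\<alpha> > 0" "\<gamma> > 0" "\<alpha>' > 0" "\<gamma>' > 0"
    and "\<alpha> / \<gamma> \<notin> \<rat>" "\<alpha>' / \<gamma>' \<notin> \<rat>"
  shows "top_equiv_at_top (AP \<alpha> \<beta>) (AP \<gamma> \<delta>) (AP \<alpha>' \<beta>') (AP \<gamma>' \<delta>') \<longleftrightarrow>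
    (\<alpha> / \<gamma> = \<alpha>' / \<gamma>' \<and>
     (\<beta> - \<delta>) / \<gamma> - (\<beta>' - \<delta>') / \<gamma>' \<in> subgrp_1 (\<alpha> / \<gamma>))"
proof
  assume "top_equiv_at_top (AP \<alpha> \<beta>) (AP \<gamma> \<delta>) (AP \<alpha>' \<beta>') (AP \<gamma>' \<delta>')"
  then obtain R R' h g where hom: "homeomorphism {R<..} {R'<..} h g" and lim: "filterlim h at_top at_top"
    and img1: "h ` (AP \<alpha> \<beta> \<inter> {R<..}) = AP \<alpha>' \<beta>' \<inter> {R'<..}"
    and img2: "h ` (AP \<gamma> \<delta> \<inter> {R<..}) = AP \<gamma>' \<delta>' \<inter> {R'<..}"
    unfolding top_equiv_at_top_def by blast
  have sm: "strict_mono_on {R<..} h" by (rule homeo_strict_mono[OF hom lim])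
  obtain N N' where NN: "\<And>j. \<alpha> * real (N + j) + \<beta> > R \<and> h (\<alpha> * real (N + j) + \<beta>) = \<alpha>' * real (N' + j) + \<beta>'"
    using AP_index[OF assms(1,3) sm img1] by blast
  obtain M M' where MM: "\<And>j. \<gamma> * real (M + j) + \<delta> > R \<and> h (\<gamma> * real (M + j) + \<delta>) = \<gamma>' * real (M' + j) + \<delta>'"
    using AP_index[OF assms(2,4) sm img2] by blast
  define a where "a = \<alpha> / \<gamma>"
  define a' where "a' = \<alpha>' / \<gamma>'"
  define s where "s = (\<alpha> * real N + \<beta> - \<delta>) / \<gamma> - real M"
  define s' where "s' = (\<alpha>' * real N' + \<beta>' - \<delta>') / \<gamma>' - real M'"
  have H: "\<forall>n m::nat. (real m \<le> a * real n + s \<longleftrightarrow> real m \<le> a' * real n + s')"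
  proof (intro allI)
    fix n m :: nat
    have "h (\<alpha> * real (N + n) + \<beta>) < h (\<gamma> * real (M + m) + \<delta>) \<longleftrightarrow>
          \<alpha> * real (N + n) + \<beta> < \<gamma> * real (M + m) + \<delta>"
      by (rule strict_mono_on_less[OF sm]) (use NN[of n] MM[of m] in auto)
    then have "\<alpha>' * real (N' + n) + \<beta>' < \<gamma>' * real (M' + m) + \<delta>' \<longleftrightarrow>
          \<alpha> * real (N + n) + \<beta> < \<gamma> * real (M + m) + \<delta>"
      using NN MM by metis
    then have "a' * real n + s' < real m \<longleftrightarrow> a * real n + s < real m"
      unfolding a_def a'_def s_def s'_def using conv[OF assms(2)] conv[OF assms(4)] by metis
    then show "(real m \<le> a * real n + s \<longleftrightarrow> real m \<le> a' * real n + s')" by linarith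
  qed
  have apos: "a > 0" "a' > 0" using assms unfolding a_def a'_def by simp_all
  have "a = a'"
  proof (rule ccontr)
    assume "a \<noteq> a'"
    then consider "a < a'" | "a' < a" by linarith
    then show False
    proof cases
      case 1 then show False using eqa[OF apos H] by blast
    next
      case 2
      have H': "\<forall>n m::nat. (real m \<le> a' * real n + s' \<longleftrightarrow> real m \<le> a * real n + s)" using H by metis
      show False using eqa[OF apos(2) apos(1) H' 2] .
    qed
  qed
  have irr: "a \<notin> \<rat>" using assms(5) a_def by simp
  have "s = s'"
  proof (rule ccontr)
    assume "s \<noteq> s'"
    then consider "s' < s" | "s < s'" by linarith
    then show False
    proof cases
      case 1 then show False using eqs[OF irr apos(1) _ 1] H \<open>a = a'\<close> by blast
    next
      case 2
      have H': "\<forall>n m::nat. (real m \<le> a * real n + s' \<longleftrightarrow> real m \<le> a * real n + s)" using H \<open>a = a'\<close> by metis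
      show False using eqs[OF irr apos(1) H' 2] .
    qed
  qed
  have e1: "(\<beta> - \<delta>) / \<gamma> = s + real M - a * real N"
    unfolding s_def a_def using assms(2) by (simp add: field_simps)
  have e2: "(\<beta>' - \<delta>') / \<gamma>' = s' + real M' - a' * real N'"
    unfolding s'_def a'_def using assms(4) by (simp add: field_simps)
  have "(\<beta> - \<delta>) / \<gamma> - (\<beta>' - \<delta>') / \<gamma>' = of_int (int M - int M') + of_int (int N' - int N) * a"
    unfolding e1 e2 \<open>s = s'\<close> \<open>a = a'\<close> by (simp add: algebra_simps)
  then have "(\<beta> - \<delta>) / \<gamma> - (\<beta>' - \<delta>') / \<gamma>' \<in> subgrp_1 (\<alpha> / \<gamma>)"
    unfolding subgrp_1_def a_def by blast
  then show "\<alpha> / \<gamma> = \<alpha>' / \<gamma>' \<and> (\<beta> - \<delta>) / \<gamma> - (\<beta>' - \<delta>') / \<gamma>' \<in> subgrp_1 (\<alpha> / \<gamma>)"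
    using \<open>a = a'\<close> a_def a'_def by simp
next
  assume R: "\<alpha> / \<gamma> = \<alpha>' / \<gamma>' \<and> (\<beta> - \<delta>) / \<gamma> - (\<beta>' - \<delta>') / \<gamma>' \<in> subgrp_1 (\<alpha> / \<gamma>)"
  then obtain k l :: int where kl: "(\<beta> - \<delta>) / \<gamma> - (\<beta>' - \<delta>') / \<gamma>' = of_int k + of_int l * (\<alpha> / \<gamma>)"
    unfolding subgrp_1_def by blast
  have eqr: "\<alpha> / \<gamma> = \<alpha>' / \<gamma>'" using R by blast
  define c where "c = \<gamma>' / \<gamma>"
  define d where "d = \<delta>' - \<gamma>' * of_int k - c * \<delta>"
  have c: "c > 0" using assms c_def by simp
  have ca: "c * \<alpha> = \<alpha>'" using eqr assms unfolding c_def by (simp add: field_simps)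
  have cg: "c * \<gamma> = \<gamma>'" using assms unfolding c_def by simp
  have cb: "c * \<beta> + d = \<alpha>' * of_int l + \<beta>'"
  proof -
    have h1: "\<gamma>' * ((\<beta> - \<delta>) / \<gamma> - (\<beta>' - \<delta>') / \<gamma>') = \<gamma>' * (of_int k + of_int l * (\<alpha> / \<gamma>))"
      by (simp only: kl)
    have h2: "\<gamma>' * ((\<beta> - \<delta>) / \<gamma> - (\<beta>' - \<delta>') / \<gamma>') = c * (\<beta> - \<delta>) - (\<beta>' - \<delta>')"
      using assms(2,4) unfolding c_def by (simp add: field_simps)
    have h3: "\<gamma>' * (of_int k + of_int l * (\<alpha> / \<gamma>)) = \<gamma>' * of_int k + of_int l * \<alpha>'"
      unfolding eqr using assms(4) by (simp add: algebra_simps)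
    have "c * (\<beta> - \<delta>) = (\<beta>' - \<delta>') + \<gamma>' * of_int k + of_int l * \<alpha>'"
      using h1 h2 h3 by linarith
    then show ?thesis unfolding d_def by (simp add: algebra_simps)
  qed
  have cd: "c * \<delta> + d = \<gamma>' * of_int (- k) + \<delta>'" unfolding d_def by simp
  define R where "R = max (max (\<beta> - \<alpha>) (\<delta> - \<gamma>)) (max ((\<beta>' - \<alpha>' - d) / c) ((\<delta>' - \<gamma>' - d) / c))"
  have R1: "R \<ge> \<beta> - \<alpha>" "R \<ge> \<delta> - \<gamma>" unfolding R_def by auto
  have "R \<ge> (\<beta>' - \<alpha>' - d) / c" "R \<ge> (\<delta>' - \<gamma>' - d) / c" unfolding R_def by auto
  then have R2: "c * R + d \<ge> \<beta>' - \<alpha>'" "c * R + d \<ge> \<delta>' - \<gamma>'" using c by (simp_all add: field_simps)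
  have lim: "filterlim (\<lambda>x. c * x + d) at_top at_top"
    unfolding filterlim_at_top_dense
  proof
    fix Z :: real
    have "\<forall>x\<ge>(Z - d) / c + 1. Z < c * x + d"
    proof (intro allI impI)
      fix x assume "x \<ge> (Z - d) / c + 1"
      then have "c * x \<ge> c * ((Z - d) / c + 1)" using c by (simp add: mult_left_mono)
      moreover have "c * ((Z - d) / c + 1) = Z - d + c" using c by (simp add: field_simps)
      ultimately show "Z < c * x + d" using c by linarith
    qed
    then show "eventually (\<lambda>x. Z < c * x + d) at_top" unfolding eventually_at_top_linorder by blast
  qed
  show "top_equiv_at_top (AP \<alpha> \<beta>) (AP \<gamma> \<delta>) (AP \<alpha>' \<beta>') (AP \<gamma>' \<delta>')"
    unfolding top_equiv_at_top_def
    using affine_homeo[OF c, of R d] lim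
      affine_AP[OF c assms(1) assms(3) ca cb R1(1) R2(1)]
      affine_AP[OF c assms(2) assms(4) cg cd R1(2) R2(2)] by blast
qed

end
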